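(* Let $L=\mathbb{C}(x_1,y_1,z_1,x_2,y_2,z_2)$ with $\mathbb{Z}/3\mathbb{Z}$ acting by simultaneous cyclic permutation of $(x_1,y_1,z_1)$ and $(x_2,y_2,z_2)$. The subfield of $L$ generated by $F_1(x_1,y_1,z_1),F_2(x_1,y_1,z_1),F_3(x_1,y_1,z_1)$, $F_1(x_2,y_2,z_2)$, $G_1(x_1,y_1,z_1,x_2,y_2,z_2)$, and $G_2(x_1,y_1,z_1,x_2,y_2,z_2)$ equals $K=\mathbb{C}(a_1,a_2,b_1^3,b_1c_1,b_1c_2,c_1b_2)$, and $K=L^{\mathbb{Z}/3\mathbb{Z}}$. In other words, every $\mathbb{Z}/3\mathbb{Z}$-invariant rational function of these six variables is a rational function of these six functions.
   Context: Let $\zeta=e^{2\pi i/3}$ and for $\ell=1,2$ set $a_\ell=x_\ell+y_\ell+z_\ell$, $b_\ell=x_\ell+\zeta y_\ell+\zeta^2 z_\ell$, $c_\ell=x_\ell+\zeta^2 y_\ell+\zeta z_\ell$. For a triple $(x,y,z)$ with corresponding $a,b,c$, $F_1=a$, $F_2=\frac{b^2}{c}+\frac{c^2}{b}$, $F_3=\frac{1}{i}\left(\frac{b^2}{c}-\frac{c^2}{b}\right)$. $G_1$ and $G_2$ are the real and imaginary parts of $b_1c_2$. The generator of $\mathbb{Z}/3\mathbb{Z}$ multiplies $b_1,b_2$ by $\zeta$ and $c_1,c_2$ by $\zeta^2$. *)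

theory Defs
  imports Complex_Main "HOL-Computational_Algebra.Polynomial" "HOL-Computational_Algebra.Fraction_Field"
begin

text \<open>The polynomial ring C[x1,y1,z1,x2,y2,z2], realised as iterated univariate
polynomials (x1 innermost, z2 outermost), and its field of fractions L.\<close>
type_synonym P6 = "complex poly poly poly poly poly poly"
type_synonym L6 = "P6 fract"

definition cst :: "complex \<Rightarrow> L6" where
  "cst c = Fract [:[:[:[:[:[:c:]:]:]:]:]:] 1"

definition X1 :: L6 where "X1 = Fract [:[:[:[:[:[:0, 1:]:]:]:]:]:] 1"
definition Y1 :: L6 where "Y1 = Fract [:[:[:[:[:0, 1:]:]:]:]:] 1"
definition Z1 :: L6 where "Z1 = Fract [:[:[:[:0, 1:]:]:]:] 1"
definition X2 :: L6 where "X2 = Fract [:[:[:0, 1:]:]:] 1"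
definition Y2 :: L6 where "Y2 = Fract [:[:0, 1:]:] 1"
definition Z2 :: L6 where "Z2 = Fract [:0, 1:] 1"

definition ev1 :: "L6 \<Rightarrow> complex poly \<Rightarrow> L6" where
  "ev1 v1 p = poly (map_poly cst p) v1"
definition ev2 :: "L6 \<Rightarrow> L6 \<Rightarrow> complex poly poly \<Rightarrow> L6" where
  "ev2 v1 v2 p = poly (map_poly (ev1 v1) p) v2"
definition ev3 :: "L6 \<Rightarrow> L6 \<Rightarrow> L6 \<Rightarrow> complex poly poly poly \<Rightarrow> L6" where
  "ev3 v1 v2 v3 p = poly (map_poly (ev2 v1 v2) p) v3"
definition ev4 :: "L6 \<Rightarrow> L6 \<Rightarrow> L6 \<Rightarrow> L6 \<Rightarrow> complex poly poly poly poly \<Rightarrow> L6" where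
  "ev4 v1 v2 v3 v4 p = poly (map_poly (ev3 v1 v2 v3) p) v4"
definition ev5 :: "L6 \<Rightarrow> L6 \<Rightarrow> L6 \<Rightarrow> L6 \<Rightarrow> L6 \<Rightarrow> complex poly poly poly poly poly \<Rightarrow> L6" where
  "ev5 v1 v2 v3 v4 v5 p = poly (map_poly (ev4 v1 v2 v3 v4) p) v5"
definition ev6 :: "L6 \<Rightarrow> L6 \<Rightarrow> L6 \<Rightarrow> L6 \<Rightarrow> L6 \<Rightarrow> L6 \<Rightarrow> P6 \<Rightarrow> L6" where
  "ev6 v1 v2 v3 v4 v5 v6 p = poly (map_poly (ev5 v1 v2 v3 v4 v5) p) v6"

text \<open>The generator of Z/3Z: the C-automorphism of L6 substituting
x_l -> y_l, y_l -> z_l, z_l -> x_l simultaneously for l = 1,2.\<close>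
definition sigma :: "L6 \<Rightarrow> L6" where
  "sigma f = (SOME r. \<exists>a b. b \<noteq> 0 \<and> f = Fract a b \<and>
      r = ev6 Y1 Z1 X1 Y2 Z2 X2 a / ev6 Y1 Z1 X1 Y2 Z2 X2 b)"

inductive_set gen_subfield :: "L6 set \<Rightarrow> L6 set" for S :: "L6 set" where
  gen_base: "f \<in> S \<Longrightarrow> f \<in> gen_subfield S"
| gen_const: "cst c \<in> gen_subfield S"
| gen_add: "f \<in> gen_subfield S \<Longrightarrow> g \<in> gen_subfield S \<Longrightarrow> f + g \<in> gen_subfield S"
| gen_uminus: "f \<in> gen_subfield S \<Longrightarrow> - f \<in> gen_subfield S"
| gen_mult: "f \<in> gen_subfield S \<Longrightarrow> g \<in> gen_subfield S \<Longrightarrow> f * g \<in> gen_subfield S"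
| gen_inverse: "f \<in> gen_subfield S \<Longrightarrow> inverse f \<in> gen_subfield S"

definition zeta :: complex where "zeta = cis (2 * pi / 3)"

definition aa :: "L6 \<Rightarrow> L6 \<Rightarrow> L6 \<Rightarrow> L6" where "aa x y z = x + y + z"
definition bb :: "L6 \<Rightarrow> L6 \<Rightarrow> L6 \<Rightarrow> L6" where
  "bb x y z = x + cst zeta * y + cst (zeta ^ 2) * z"
definition cc :: "L6 \<Rightarrow> L6 \<Rightarrow> L6 \<Rightarrow> L6" where
  "cc x y z = x + cst (zeta ^ 2) * y + cst zeta * z"

definition F1 :: "L6 \<Rightarrow> L6 \<Rightarrow> L6 \<Rightarrow> L6" where "F1 x y z = aa x y z"
definition F2 :: "L6 \<Rightarrow> L6 \<Rightarrow> L6 \<Rightarrow> L6" where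
  "F2 x y z = (bb x y z)^2 / cc x y z + (cc x y z)^2 / bb x y z"
definition F3 :: "L6 \<Rightarrow> L6 \<Rightarrow> L6 \<Rightarrow> L6" where
  "F3 x y z = cst (1 / \<i>) * ((bb x y z)^2 / cc x y z - (cc x y z)^2 / bb x y z)"

text \<open>Real and imaginary parts of b1*c2 (for real variables, conj b_l = c_l).\<close>
definition G1 :: "L6 \<Rightarrow> L6 \<Rightarrow> L6 \<Rightarrow> L6 \<Rightarrow> L6 \<Rightarrow> L6 \<Rightarrow> L6" where
  "G1 x1 y1 z1 x2 y2 z2 =
     cst (1/2) * (bb x1 y1 z1 * cc x2 y2 z2 + cc x1 y1 z1 * bb x2 y2 z2)"
definition G2 :: "L6 \<Rightarrow> L6 \<Rightarrow> L6 \<Rightarrow> L6 \<Rightarrow> L6 \<Rightarrow> L6 \<Rightarrow> L6" where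
  "G2 x1 y1 z1 x2 y2 z2 =
     cst (1 / (2 * \<i>)) * (bb x1 y1 z1 * cc x2 y2 z2 - cc x1 y1 z1 * bb x2 y2 z2)"

end

theory Submission
  imports Defs
begin


definition rhom :: "('a::comm_ring_1 \<Rightarrow> 'b::comm_ring_1) \<Rightarrow> bool" where
  "rhom h \<longleftrightarrow> h 0 = 0 \<and> h 1 = 1 \<and> (\<forall>x y. h (x+y) = h x + h y) \<and> (\<forall>x y. h (x*y) = h x * h y)"

lemma rhomD: assumes "rhom h" shows "h 0 = 0" "h 1 = 1" "h (x+y) = h x + h y" "h (x*y) = h x * h y"
  using assms by (auto simp: rhom_def)

lemma rhom_minus: assumes "rhom h" shows "h (-x) = - h x"
proof -
  have "h (-x) + h x = 0" using rhomD[OF assms] by (metis add.commute add.right_inverse)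
  thus ?thesis by (simp add: eq_neg_iff_add_eq_0)
qed

lemma rhom_diff: assumes "rhom h" shows "h (x - y) = h x - h y"
  using rhomD(3)[OF assms, of x "-y"] rhom_minus[OF assms, of y] by simp

lemma rhom_pow: assumes "rhom h" shows "h (x ^ n) = h x ^ n"
  by (induction n) (simp_all add: rhomD[OF assms])

lemma rhom_comp: "rhom f \<Longrightarrow> rhom g \<Longrightarrow> rhom (f \<circ> g)"
  by (simp add: rhom_def)

lemma map_poly_add_h: assumes "rhom h" shows "map_poly h (p + q) = map_poly h p + map_poly h q"
  by (rule poly_eqI) (simp add: coeff_map_poly rhomD[OF assms])

lemma poly_map_add: assumes "rhom h"
  shows "poly (map_poly h (p + q)) v = poly (map_poly h p) v + poly (map_poly h q) v"
  by (simp add: map_poly_add_h[OF assms])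

lemma poly_map_pCons: assumes "rhom h"
  shows "poly (map_poly h (pCons a p)) v = h a + v * poly (map_poly h p) v"
  by (simp add: map_poly_pCons rhomD[OF assms])

lemma poly_map_smult: assumes "rhom h"
  shows "poly (map_poly h (smult a p)) v = h a * poly (map_poly h p) v"
  by (simp add: map_poly_smult rhomD[OF assms])

lemma poly_map_mult: assumes "rhom h"
  shows "poly (map_poly h (p * q)) v = poly (map_poly h p) v * poly (map_poly h q) v"
proof (induction p)
  case 0
  then show ?case by simp
next
  case (pCons a p)
  have "poly (map_poly h (pCons a p * q)) v = poly (map_poly h (smult a q + pCons 0 (p * q))) v"
    by simp
  also have "\<dots> = h a * poly (map_poly h q) v + v * poly (map_poly h (p * q)) v"
    by (simp add: poly_map_add[OF assms] poly_map_smult[OF assms] poly_map_pCons[OF assms] rhomD[OF assms])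
  also have "\<dots> = poly (map_poly h (pCons a p)) v * poly (map_poly h q) v"
    by (simp add: pCons.IH poly_map_pCons[OF assms] algebra_simps)
  finally show ?case .
qed

lemma rhom_poly: assumes "rhom h" shows "rhom (\<lambda>p. poly (map_poly h p) v)"
  unfolding rhom_def using assms
  by (simp add: poly_map_add poly_map_mult rhomD[OF assms] map_poly_1)

lemma poly_map_comm: assumes "rhom \<phi>" "rhom h"
  shows "\<phi> (poly (map_poly h p) v) = poly (map_poly (\<phi> \<circ> h) p) (\<phi> v)"
proof (induction p)
  case 0
  then show ?case by (simp add: rhomD[OF assms(1)])
next
  case (pCons a p)
  then show ?case
    by (simp add: map_poly_pCons rhomD[OF assms(1)] rhomD[OF assms(2)])
qed

lemma poly_map_id: assumes "rhom e" "\<And>a. h a = e [:a:]" "rhom h"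
  shows "poly (map_poly h p) (e [:0,1:]) = e p"
proof (induction p)
  case 0
  then show ?case by (simp add: rhomD[OF assms(1)])
next
  case (pCons a p)
  have "pCons a p = [:a:] + [:0,1:] * p" by simp
  hence "e (pCons a p) = e [:a:] + e [:0,1:] * e p" by (metis rhomD(3,4)[OF assms(1)])
  have h0: "h 0 = 0" using assms(3) rhomD by blast
  then show ?case using pCons \<open>e (pCons a p) = _\<close> by (simp add: map_poly_pCons assms(2))
qed

lemma poly_map_in: assumes "rhom h" "\<And>a. h a \<in> S" "v \<in> S" "0 \<in> S"
  "\<And>x y. x \<in> S \<Longrightarrow> y \<in> S \<Longrightarrow> x + y \<in> S" "\<And>x y. x \<in> S \<Longrightarrow> y \<in> S \<Longrightarrow> x * y \<in> S"
  shows "poly (map_poly h p) v \<in> S"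
  by (induction p) (simp_all add: poly_map_pCons assms)

lemma rhom_const: "rhom (\<lambda>a. [:a:])"
  by (simp add: rhom_def one_pCons mult_to_poly)

lemma poly_map_const: "rhom h \<Longrightarrow> poly (map_poly h [:a:]) v = h a"
  by (simp add: poly_map_pCons rhomD)

lemma poly_map_var: "rhom h \<Longrightarrow> poly (map_poly h [:0,1:]) v = v"
  by (simp add: poly_map_pCons rhomD)

definition g1 :: "('c::comm_ring_1 \<Rightarrow> 'b::comm_ring_1) \<Rightarrow> 'b \<Rightarrow> 'c poly \<Rightarrow> 'b" where
  "g1 k v1 = (\<lambda>p. poly (map_poly k p) v1)"
definition g2 :: "('c::comm_ring_1 \<Rightarrow> 'b::comm_ring_1) \<Rightarrow> 'b \<Rightarrow> 'b \<Rightarrow> 'c poly poly \<Rightarrow> 'b" where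
  "g2 k v1 v2 = (\<lambda>p. poly (map_poly (g1 k v1) p) v2)"
definition g3 :: "('c::comm_ring_1 \<Rightarrow> 'b::comm_ring_1) \<Rightarrow> 'b \<Rightarrow> 'b \<Rightarrow> 'b \<Rightarrow> 'c poly poly poly \<Rightarrow> 'b" where
  "g3 k v1 v2 v3 = (\<lambda>p. poly (map_poly (g2 k v1 v2) p) v3)"
definition g4 :: "('c::comm_ring_1 \<Rightarrow> 'b::comm_ring_1) \<Rightarrow> 'b \<Rightarrow> 'b \<Rightarrow> 'b \<Rightarrow> 'b \<Rightarrow> 'c poly poly poly poly \<Rightarrow> 'b" where
  "g4 k v1 v2 v3 v4 = (\<lambda>p. poly (map_poly (g3 k v1 v2 v3) p) v4)"
definition g5 :: "('c::comm_ring_1 \<Rightarrow> 'b::comm_ring_1) \<Rightarrow> 'b \<Rightarrow> 'b \<Rightarrow> 'b \<Rightarrow> 'b \<Rightarrow> 'b \<Rightarrow> 'c poly poly poly poly poly \<Rightarrow> 'b" where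
  "g5 k v1 v2 v3 v4 v5 = (\<lambda>p. poly (map_poly (g4 k v1 v2 v3 v4) p) v5)"
definition g6 :: "('c::comm_ring_1 \<Rightarrow> 'b::comm_ring_1) \<Rightarrow> 'b \<Rightarrow> 'b \<Rightarrow> 'b \<Rightarrow> 'b \<Rightarrow> 'b \<Rightarrow> 'b \<Rightarrow> 'c poly poly poly poly poly poly \<Rightarrow> 'b" where
  "g6 k v1 v2 v3 v4 v5 v6 = (\<lambda>p. poly (map_poly (g5 k v1 v2 v3 v4 v5) p) v6)"

lemma ev6_g6: "ev6 v1 v2 v3 v4 v5 v6 = g6 cst v1 v2 v3 v4 v5 v6"
proof -
  have h1: "ev1 v1 = g1 cst v1" by (rule ext) (simp add: ev1_def g1_def)
  have h2: "ev2 v1 v2 = g2 cst v1 v2" by (rule ext) (simp add: ev2_def g2_def h1)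
  have h3: "ev3 v1 v2 v3 = g3 cst v1 v2 v3" by (rule ext) (simp add: ev3_def g3_def h2)
  have h4: "ev4 v1 v2 v3 v4 = g4 cst v1 v2 v3 v4" by (rule ext) (simp add: ev4_def g4_def h3)
  have h5: "ev5 v1 v2 v3 v4 v5 = g5 cst v1 v2 v3 v4 v5" by (rule ext) (simp add: ev5_def g5_def h4)
  show ?thesis by (rule ext) (simp add: ev6_def g6_def h5)
qed

lemma rhom_g1: "rhom k \<Longrightarrow> rhom (g1 k v1)" unfolding g1_def by (rule rhom_poly)
lemma rhom_g2: "rhom k \<Longrightarrow> rhom (g2 k v1 v2)" unfolding g2_def by (rule rhom_poly, rule rhom_g1)
lemma rhom_g3: "rhom k \<Longrightarrow> rhom (g3 k v1 v2 v3)" unfolding g3_def by (rule rhom_poly, rule rhom_g2)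
lemma rhom_g4: "rhom k \<Longrightarrow> rhom (g4 k v1 v2 v3 v4)" unfolding g4_def by (rule rhom_poly, rule rhom_g3)
lemma rhom_g5: "rhom k \<Longrightarrow> rhom (g5 k v1 v2 v3 v4 v5)" unfolding g5_def by (rule rhom_poly, rule rhom_g4)
lemma rhom_g6: "rhom k \<Longrightarrow> rhom (g6 k v1 v2 v3 v4 v5 v6)" unfolding g6_def by (rule rhom_poly, rule rhom_g5)

lemma comm_g6: assumes "rhom \<phi>" "rhom k"
  shows "\<phi> (g6 k v1 v2 v3 v4 v5 v6 p) = g6 (\<phi> \<circ> k) (\<phi> v1) (\<phi> v2) (\<phi> v3) (\<phi> v4) (\<phi> v5) (\<phi> v6) p"
proof -
  have A1: "\<phi> \<circ> g1 k v1 = g1 (\<phi> \<circ> k) (\<phi> v1)"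
    by (rule ext) (simp only: g1_def o_apply poly_map_comm[OF assms])
  have A2: "\<phi> \<circ> g2 k v1 v2 = g2 (\<phi> \<circ> k) (\<phi> v1) (\<phi> v2)"
    by (rule ext) (simp only: g2_def o_apply poly_map_comm[OF assms(1) rhom_g1[OF assms(2)]] A1)
  have A3: "\<phi> \<circ> g3 k v1 v2 v3 = g3 (\<phi> \<circ> k) (\<phi> v1) (\<phi> v2) (\<phi> v3)"
    by (rule ext) (simp only: g3_def o_apply poly_map_comm[OF assms(1) rhom_g2[OF assms(2)]] A2)
  have A4: "\<phi> \<circ> g4 k v1 v2 v3 v4 = g4 (\<phi> \<circ> k) (\<phi> v1) (\<phi> v2) (\<phi> v3) (\<phi> v4)"
    by (rule ext) (simp only: g4_def o_apply poly_map_comm[OF assms(1) rhom_g3[OF assms(2)]] A3)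
  have A5: "\<phi> \<circ> g5 k v1 v2 v3 v4 v5 = g5 (\<phi> \<circ> k) (\<phi> v1) (\<phi> v2) (\<phi> v3) (\<phi> v4) (\<phi> v5)"
    by (rule ext) (simp only: g5_def o_apply poly_map_comm[OF assms(1) rhom_g4[OF assms(2)]] A4)
  show ?thesis
    by (simp only: g6_def poly_map_comm[OF assms(1) rhom_g5[OF assms(2)]] A5)
qed

lemma rhom_wrap: assumes "rhom f" shows "rhom (\<lambda>p. [:f p:])"
  unfolding rhom_def by (simp add: rhomD[OF assms] one_pCons mult_to_poly)

definition c6 :: "complex \<Rightarrow> P6" where "c6 c = [:[:[:[:[:[:c:]:]:]:]:]:]"
definition x1p :: P6 where "x1p = [:[:[:[:[:[:0, 1:]:]:]:]:]:]"
definition y1p :: P6 where "y1p = [:[:[:[:[:0, 1:]:]:]:]:]"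
definition z1p :: P6 where "z1p = [:[:[:[:0, 1:]:]:]:]"
definition x2p :: P6 where "x2p = [:[:[:0, 1:]:]:]"
definition y2p :: P6 where "y2p = [:[:0, 1:]:]"
definition z2p :: P6 where "z2p = [:0, 1:]"

lemma rhom_id: "rhom (\<lambda>x. x)" by (simp add: rhom_def)

lemma g6_id: "g6 c6 x1p y1p z1p x2p y2p z2p p = p"
proof -
  have r5: "rhom (\<lambda>p::complex poly poly poly poly poly. [:p:])" by (rule rhom_const)
  have r4: "rhom (\<lambda>p::complex poly poly poly poly. [:[:p:]:])" by (rule rhom_wrap[OF rhom_const])
  have r3: "rhom (\<lambda>p::complex poly poly poly. [:[:[:p:]:]:])" by (rule rhom_comp[OF r4 rhom_const, unfolded o_def])
  have r2: "rhom (\<lambda>p::complex poly poly. [:[:[:[:p:]:]:]:])" by (rule rhom_comp[OF r3 rhom_const, unfolded o_def])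
  have r1: "rhom (\<lambda>p::complex poly. [:[:[:[:[:p:]:]:]:]:])" by (rule rhom_comp[OF r2 rhom_const, unfolded o_def])
  have r0: "rhom c6" unfolding c6_def by (rule rhom_comp[OF r1 rhom_const, unfolded o_def])
  have e1: "g1 c6 x1p = (\<lambda>p. [:[:[:[:[:p:]:]:]:]:])"
    unfolding g1_def x1p_def by (rule ext, rule poly_map_id[OF r1 _ r0]) (simp add: c6_def)
  have e2: "g2 c6 x1p y1p = (\<lambda>p. [:[:[:[:p:]:]:]:])"
    unfolding g2_def y1p_def e1 by (rule ext, rule poly_map_id[OF r2 _ r1]) simp
  have e3: "g3 c6 x1p y1p z1p = (\<lambda>p. [:[:[:p:]:]:])"
    unfolding g3_def z1p_def e2 by (rule ext, rule poly_map_id[OF r3 _ r2]) simp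
  have e4: "g4 c6 x1p y1p z1p x2p = (\<lambda>p. [:[:p:]:])"
    unfolding g4_def x2p_def e3 by (rule ext, rule poly_map_id[OF r4 _ r3]) simp
  have e5: "g5 c6 x1p y1p z1p x2p y2p = (\<lambda>p. [:p:])"
    unfolding g5_def y2p_def e4 by (rule ext, rule poly_map_id[OF r5 _ r4]) simp
  show ?thesis
    unfolding g6_def z2p_def e5 by (rule poly_map_id[OF rhom_id _ r5, simplified])
qed


lemma g1c: "rhom k \<Longrightarrow> g1 k v1 [:c:] = k c" by (simp add: g1_def poly_map_const)
lemma g2c: "rhom k \<Longrightarrow> g2 k v1 v2 [:c:] = g1 k v1 c" by (simp add: g2_def poly_map_const rhom_g1)
lemma g3c: "rhom k \<Longrightarrow> g3 k v1 v2 v3 [:c:] = g2 k v1 v2 c" by (simp add: g3_def poly_map_const rhom_g2)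
lemma g4c: "rhom k \<Longrightarrow> g4 k v1 v2 v3 v4 [:c:] = g3 k v1 v2 v3 c" by (simp add: g4_def poly_map_const rhom_g3)
lemma g5c: "rhom k \<Longrightarrow> g5 k v1 v2 v3 v4 v5 [:c:] = g4 k v1 v2 v3 v4 c" by (simp add: g5_def poly_map_const rhom_g4)
lemma g6c: "rhom k \<Longrightarrow> g6 k v1 v2 v3 v4 v5 v6 [:c:] = g5 k v1 v2 v3 v4 v5 c" by (simp add: g6_def poly_map_const rhom_g5)
lemma g1v: "rhom k \<Longrightarrow> g1 k v1 [:0,1:] = v1" by (simp add: g1_def poly_map_var)
lemma g2v: "rhom k \<Longrightarrow> g2 k v1 v2 [:0,1:] = v2" by (simp add: g2_def poly_map_var rhom_g1)
lemma g3v: "rhom k \<Longrightarrow> g3 k v1 v2 v3 [:0,1:] = v3" by (simp add: g3_def poly_map_var rhom_g2)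
lemma g4v: "rhom k \<Longrightarrow> g4 k v1 v2 v3 v4 [:0,1:] = v4" by (simp add: g4_def poly_map_var rhom_g3)
lemma g5v: "rhom k \<Longrightarrow> g5 k v1 v2 v3 v4 v5 [:0,1:] = v5" by (simp add: g5_def poly_map_var rhom_g4)
lemma g6v: "rhom k \<Longrightarrow> g6 k v1 v2 v3 v4 v5 v6 [:0,1:] = v6" by (simp add: g6_def poly_map_var rhom_g5)

lemmas gcv = g1c g2c g3c g4c g5c g6c g1v g2v g3v g4v g5v g6v

lemma g6_vals: assumes "rhom k"
  shows "g6 k v1 v2 v3 v4 v5 v6 (c6 c) = k c"
    "g6 k v1 v2 v3 v4 v5 v6 x1p = v1" "g6 k v1 v2 v3 v4 v5 v6 y1p = v2" "g6 k v1 v2 v3 v4 v5 v6 z1p = v3"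
    "g6 k v1 v2 v3 v4 v5 v6 x2p = v4" "g6 k v1 v2 v3 v4 v5 v6 y2p = v5" "g6 k v1 v2 v3 v4 v5 v6 z2p = v6"
  by (simp_all add: c6_def x1p_def y1p_def z1p_def x2p_def y2p_def z2p_def gcv assms)

lemma rhom_c6: "rhom c6"
proof -
  have r4: "rhom (\<lambda>p::complex poly poly poly poly. [:[:p:]:])" by (rule rhom_wrap[OF rhom_const])
  have r3: "rhom (\<lambda>p::complex poly poly poly. [:[:[:p:]:]:])" by (rule rhom_comp[OF r4 rhom_const, unfolded o_def])
  have r2: "rhom (\<lambda>p::complex poly poly. [:[:[:[:p:]:]:]:])" by (rule rhom_comp[OF r3 rhom_const, unfolded o_def])
  have r1: "rhom (\<lambda>p::complex poly. [:[:[:[:[:p:]:]:]:]:])" by (rule rhom_comp[OF r2 rhom_const, unfolded o_def])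
  show "rhom c6" unfolding c6_def by (rule rhom_comp[OF r1 rhom_const, unfolded o_def])
qed

definition perm :: "P6 \<Rightarrow> P6" where "perm = g6 c6 y1p z1p x1p y2p z2p x2p"

lemma rhom_perm: "rhom perm" unfolding perm_def by (rule rhom_g6[OF rhom_c6])

lemma perm_vals: "perm (c6 c) = c6 c" "perm x1p = y1p" "perm y1p = z1p" "perm z1p = x1p"
   "perm x2p = y2p" "perm y2p = z2p" "perm z2p = x2p"
  unfolding perm_def by (simp_all add: g6_vals rhom_c6)

lemma perm_c6: "perm \<circ> c6 = c6" by (rule ext) (simp add: perm_vals)

lemma perm3: "perm (perm (perm p)) = p"
proof -
  have "perm (perm p) = g6 c6 z1p x1p y1p z2p x2p y2p p"
    by (subst (2) perm_def, subst comm_g6[OF rhom_perm rhom_c6]) (simp add: perm_c6 perm_vals)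
  hence "perm (perm (perm p)) = g6 c6 x1p y1p z1p x2p y2p z2p p"
    by (simp add: comm_g6[OF rhom_perm rhom_c6] perm_c6 perm_vals)
  thus ?thesis by (simp add: g6_id)
qed

lemma perm_inj: "perm p = 0 \<longleftrightarrow> p = 0"
  by (metis perm3 rhomD(1)[OF rhom_perm])

lemma perm_eq: "perm p = perm q \<longleftrightarrow> p = q"
  by (metis perm3)

definition fr :: "P6 \<Rightarrow> L6" where "fr p = Fract p 1"

lemma rhom_fr: "rhom fr"
  unfolding rhom_def fr_def by (simp add: Zero_fract_def One_fract_def)

lemma fr_vals: "fr \<circ> c6 = cst" "fr x1p = X1" "fr y1p = Y1" "fr z1p = Z1" "fr x2p = X2" "fr y2p = Y2" "fr z2p = Z2"
  by (simp_all add: fun_eq_iff fr_def c6_def cst_def x1p_def y1p_def z1p_def x2p_def y2p_def z2p_def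
     X1_def Y1_def Z1_def X2_def Y2_def Z2_def)

lemma ev6_perm: "ev6 Y1 Z1 X1 Y2 Z2 X2 a = Fract (perm a) 1"
proof -
  have "Fract (perm a) 1 = fr (perm a)" by (simp add: fr_def)
  also have "\<dots> = g6 cst Y1 Z1 X1 Y2 Z2 X2 a"
    unfolding perm_def by (simp add: comm_g6[OF rhom_fr rhom_c6] fr_vals)
  finally show ?thesis by (simp add: ev6_g6)
qed

lemma sigma_Fract: assumes "b \<noteq> 0" shows "sigma (Fract a b) = Fract (perm a) (perm b)"
proof -
  have pb: "perm b \<noteq> 0" using assms perm_inj by blast
  show ?thesis unfolding sigma_def
  proof (rule someI2)
    show "\<exists>a' b'. b' \<noteq> 0 \<and> Fract a b = Fract a' b' \<and>
      Fract (perm a) (perm b) = ev6 Y1 Z1 X1 Y2 Z2 X2 a' / ev6 Y1 Z1 X1 Y2 Z2 X2 b'"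
      using assms pb by (intro exI[of _ a] exI[of _ b]) (simp add: ev6_perm)
  next
    fix r assume "\<exists>a' b'. b' \<noteq> 0 \<and> Fract a b = Fract a' b' \<and>
      r = ev6 Y1 Z1 X1 Y2 Z2 X2 a' / ev6 Y1 Z1 X1 Y2 Z2 X2 b'"
    then obtain a' b' where b': "b' \<noteq> 0" "Fract a b = Fract a' b'" and r: "r = Fract (perm a') 1 / Fract (perm b') 1"
      by (auto simp: ev6_perm)
    have pb': "perm b' \<noteq> 0" using b' perm_inj by blast
    have "a * b' = a' * b" using b' assms by (simp add: eq_fract)
    hence "perm a * perm b' = perm a' * perm b" by (metis rhomD(4)[OF rhom_perm])
    thus "r = Fract (perm a) (perm b)" using r pb pb' by (simp add: eq_fract)
  qed
qed


lemma fr_c6: "fr (c6 c) = cst c" using fr_vals(1) by (simp add: fun_eq_iff)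

lemma rhom_cst: "rhom cst"
proof -
  have "cst = fr \<circ> c6" by (simp add: fr_vals)
  thus ?thesis using rhom_comp[OF rhom_fr rhom_c6] by simp
qed

lemma sigma_fr: "sigma (fr p) = fr (perm p)"
  unfolding fr_def by (simp add: sigma_Fract rhomD(2)[OF rhom_perm])

lemma rhom_sigma: "rhom sigma"
proof -
  have z: "sigma 0 = 0" using sigma_fr[of 0] by (simp add: fr_def rhomD(1)[OF rhom_perm] Zero_fract_def)
  have o: "sigma 1 = 1" using sigma_fr[of 1] by (simp add: fr_def rhomD(2)[OF rhom_perm] One_fract_def)
  have a: "sigma (x + y) = sigma x + sigma y" for x y
  proof (cases x)
    case (Fract a b) note x = this
    show ?thesis
    proof (cases y)
      case (Fract c d)
      have "perm b \<noteq> 0" "perm d \<noteq> 0" using x Fract perm_inj by auto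
      thus ?thesis using x Fract
        by (simp add: sigma_Fract rhomD(3,4)[OF rhom_perm])
    qed
  qed
  have m: "sigma (x * y) = sigma x * sigma y" for x y
  proof (cases x)
    case (Fract a b) note x = this
    show ?thesis
    proof (cases y)
      case (Fract c d)
      have "perm b \<noteq> 0" "perm d \<noteq> 0" using x Fract perm_inj by auto
      thus ?thesis using x Fract
        by (simp add: sigma_Fract rhomD(3,4)[OF rhom_perm])
    qed
  qed
  show ?thesis unfolding rhom_def using z o a m by blast
qed

lemma sigma_inverse: "sigma (inverse x) = inverse (sigma x)"
proof (cases x)
  case (Fract a b)
  show ?thesis
  proof (cases "a = 0")
    case True
    then show ?thesis using Fract by (simp add: rhomD(1)[OF rhom_sigma] fract_collapse)
  next
    case False
    have "perm a \<noteq> 0" "perm b \<noteq> 0" using False Fract perm_inj by auto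
    then show ?thesis using Fract False by (simp add: sigma_Fract)
  qed
qed

lemma sigma_nz: "sigma x = 0 \<longleftrightarrow> x = 0"
proof (cases x)
  case (Fract a b)
  have "perm b \<noteq> 0" using Fract perm_inj by auto
  then show ?thesis using Fract by (simp add: sigma_Fract Zero_fract_def eq_fract perm_inj)
qed

lemma sigma3: "sigma (sigma (sigma x)) = x"
proof (cases x)
  case (Fract a b)
  have "perm b \<noteq> 0" "perm (perm b) \<noteq> 0" using Fract perm_inj by auto
  then show ?thesis using Fract by (simp add: sigma_Fract perm3)
qed

lemma sigma_cst: "sigma (cst c) = cst c"
  using sigma_fr[of "c6 c"] by (simp add: fr_c6 perm_vals)

lemma sigma_vars: "sigma X1 = Y1" "sigma Y1 = Z1" "sigma Z1 = X1" "sigma X2 = Y2" "sigma Y2 = Z2" "sigma Z2 = X2"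
  using sigma_fr[of x1p] sigma_fr[of y1p] sigma_fr[of z1p] sigma_fr[of x2p] sigma_fr[of y2p] sigma_fr[of z2p]
  by (simp_all add: fr_vals perm_vals)

lemma zeta3: "zeta ^ 3 = 1"
proof -
  have "zeta ^ 3 = cis (real 3 * (2 * pi / 3))" unfolding zeta_def by (rule DeMoivre)
  also have "real 3 * (2 * pi / 3) = 2 * pi" by simp
  finally show ?thesis by simp
qed

lemma zeta_sum: "1 + zeta + zeta ^ 2 = 0"
proof -
  have "sin (2 * pi / 3) > 0" by (rule sin_gt_zero) (auto simp: field_simps)
  hence "zeta \<noteq> 1" unfolding zeta_def by (metis cis.sel(2) one_complex.sel(2) less_irrefl)
  moreover have "(zeta - 1) * (1 + zeta + zeta ^ 2) = 0"
    using zeta3 by (simp add: algebra_simps power2_eq_square power3_eq_cube)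
  ultimately show ?thesis by simp
qed

lemma w3: "cst zeta ^ 3 = 1" using rhom_pow[OF rhom_cst, of zeta 3] zeta3 rhomD(2)[OF rhom_cst] by simp
lemma wsum: "1 + cst zeta + cst zeta ^ 2 = 0"
  using zeta_sum rhomD[OF rhom_cst] rhom_pow[OF rhom_cst] by metis
lemma w2: "cst (zeta ^ 2) = cst zeta ^ 2" by (rule rhom_pow[OF rhom_cst])

lemma cst_mult: "cst x * cst y = cst (x * y)" by (simp add: rhomD(4)[OF rhom_cst])
lemma cst_add: "cst x + cst y = cst (x + y)" by (simp add: rhomD(3)[OF rhom_cst])
lemma cst_1: "cst 1 = 1" by (simp add: rhomD(2)[OF rhom_cst])
lemma cst_0: "cst 0 = 0" by (simp add: rhomD(1)[OF rhom_cst])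
lemma cst_num: "cst (of_nat n) = of_nat n"
  by (induction n) (simp_all add: cst_0 cst_1 flip: cst_add)

lemma gen_diff: "f \<in> gen_subfield S \<Longrightarrow> g \<in> gen_subfield S \<Longrightarrow> f - g \<in> gen_subfield S"
  using gen_add[of f S "-g"] gen_uminus[of g S] by simp
lemma gen_div: "f \<in> gen_subfield S \<Longrightarrow> g \<in> gen_subfield S \<Longrightarrow> f / g \<in> gen_subfield S"
  using gen_mult[of f S "inverse g"] gen_inverse[of g S] by (simp add: divide_inverse)
lemma gen_pow: "f \<in> gen_subfield S \<Longrightarrow> f ^ n \<in> gen_subfield S"
  by (induction n) (simp_all add: gen_mult cst_1[symmetric] gen_const)
lemma gen_sub: assumes "S \<subseteq> F" "\<And>c. cst c \<in> F" "\<And>f g. f \<in> F \<Longrightarrow> g \<in> F \<Longrightarrow> f + g \<in> F"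
  "\<And>f. f \<in> F \<Longrightarrow> - f \<in> F" "\<And>f g. f \<in> F \<Longrightarrow> g \<in> F \<Longrightarrow> f * g \<in> F"
  "\<And>f. f \<in> F \<Longrightarrow> inverse f \<in> F"
  shows "gen_subfield S \<subseteq> F"
proof
  fix x assume "x \<in> gen_subfield S" thus "x \<in> F"
    by (induction rule: gen_subfield.induct) (use assms in auto)
qed
lemma gen_mono: "S \<subseteq> gen_subfield T \<Longrightarrow> gen_subfield S \<subseteq> gen_subfield T"
  by (rule gen_sub) (auto intro: gen_subfield.intros)


lemma fr_nz: "fr p = 0 \<longleftrightarrow> p = 0"
  by (simp add: fr_def Zero_fract_def eq_fract)

lemma bc_nz: "bb X1 Y1 Z1 \<noteq> 0" "cc X1 Y1 Z1 \<noteq> 0"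
proof -
  define E where "E = g6 (\<lambda>x::complex. x) 1 0 0 0 0 0"
  have rE: "rhom E" unfolding E_def by (rule rhom_g6[OF rhom_id])
  have Ev: "E (c6 c) = c" "E x1p = 1" "E y1p = 0" "E z1p = 0" for c
    unfolding E_def by (simp_all add: g6_vals rhom_id)
  have "bb X1 Y1 Z1 = fr (x1p + c6 zeta * y1p + c6 (zeta^2) * z1p)"
    by (simp add: bb_def rhomD(3,4)[OF rhom_fr] fr_vals fr_c6)
  moreover have "E (x1p + c6 zeta * y1p + c6 (zeta^2) * z1p) = 1"
    by (simp add: rhomD(3,4)[OF rE] Ev)
  ultimately show "bb X1 Y1 Z1 \<noteq> 0" using rhomD(1)[OF rE] fr_nz by force
  have "cc X1 Y1 Z1 = fr (x1p + c6 (zeta^2) * y1p + c6 zeta * z1p)"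
    by (simp add: cc_def rhomD(3,4)[OF rhom_fr] fr_vals fr_c6)
  moreover have "E (x1p + c6 (zeta^2) * y1p + c6 zeta * z1p) = 1"
    by (simp add: rhomD(3,4)[OF rE] Ev)
  ultimately show "cc X1 Y1 Z1 \<noteq> 0" using rhomD(1)[OF rE] fr_nz by force
qed

lemma g6_in: assumes "rhom k" "\<And>c. k c \<in> S" "v1 \<in> S" "v2 \<in> S" "v3 \<in> S" "v4 \<in> S" "v5 \<in> S" "v6 \<in> S"
  "0 \<in> S" "\<And>x y. x \<in> S \<Longrightarrow> y \<in> S \<Longrightarrow> x + y \<in> S" "\<And>x y. x \<in> S \<Longrightarrow> y \<in> S \<Longrightarrow> x * y \<in> S"
  shows "g6 k v1 v2 v3 v4 v5 v6 p \<in> S"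
proof -
  note cl = assms(9-11)
  have 1: "g1 k v1 q \<in> S" for q unfolding g1_def by (rule poly_map_in[OF assms(1) assms(2) assms(3) cl])
  have 2: "g2 k v1 v2 q \<in> S" for q unfolding g2_def by (rule poly_map_in[OF rhom_g1[OF assms(1)] 1 assms(4) cl])
  have 3: "g3 k v1 v2 v3 q \<in> S" for q unfolding g3_def by (rule poly_map_in[OF rhom_g2[OF assms(1)] 2 assms(5) cl])
  have 4: "g4 k v1 v2 v3 v4 q \<in> S" for q unfolding g4_def by (rule poly_map_in[OF rhom_g3[OF assms(1)] 3 assms(6) cl])
  have 5: "g5 k v1 v2 v3 v4 v5 q \<in> S" for q unfolding g5_def by (rule poly_map_in[OF rhom_g4[OF assms(1)] 4 assms(7) cl])
  show ?thesis unfolding g6_def by (rule poly_map_in[OF rhom_g5[OF assms(1)] 5 assms(8) cl])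
qed

lemma all_in: assumes "\<And>c. cst c \<in> V" "X1 \<in> V" "Y1 \<in> V" "Z1 \<in> V" "X2 \<in> V" "Y2 \<in> V" "Z2 \<in> V"
  "\<And>x y. x \<in> V \<Longrightarrow> y \<in> V \<Longrightarrow> x + y \<in> V" "\<And>x y. x \<in> V \<Longrightarrow> y \<in> V \<Longrightarrow> x * y \<in> V"
  shows "fr p \<in> V"
proof -
  have "g6 c6 x1p y1p z1p x2p y2p z2p p \<in> {q. fr q \<in> V}"
    by (rule g6_in[OF rhom_c6])
      (use assms in \<open>auto simp: fr_c6 fr_vals rhomD(3,4)[OF rhom_fr] rhomD(1)[OF rhom_fr] cst_0[symmetric]\<close>)
  thus ?thesis by (simp add: g6_id)
qed




lemma triple: fixes w x y z :: L6
  assumes "w^3 = 1" "1 + w + w^2 = 0"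
  shows "3 * x = (x+y+z) + (x + w*y + w^2*z) + (x + w^2*y + w*z)"
    "3 * y = (x+y+z) + w^2 * (x + w*y + w^2*z) + w * (x + w^2*y + w*z)"
    "3 * z = (x+y+z) + w * (x + w*y + w^2*z) + w^2 * (x + w^2*y + w*z)"
  using assms by algebra+

lemma third: "cst (1/3) * 3 = 1"
proof -
  have "cst 3 = (3::L6)" using cst_num[of 3] by simp
  hence "cst (1/3) * 3 = cst (1/3 * 3)" using cst_mult[of "1/3" 3] by simp
  thus ?thesis by (simp add: cst_1)
qed

lemma half: "cst (1/2) * 2 = 1"
proof -
  have "cst 2 = (2::L6)" using cst_num[of 2] by simp
  hence "cst (1/2) * 2 = cst (1/2 * 2)" using cst_mult[of "1/2" 2] by simp
  thus ?thesis by (simp add: cst_1)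
qed

lemma third_eq: "3 * x = y \<Longrightarrow> x = cst (1/3) * (y::L6)"
proof -
  assume "3 * x = y"
  hence "cst (1/3) * y = (cst (1/3) * 3) * x" by (simp add: mult.assoc)
  thus ?thesis using third by simp
qed

lemma sig_b: "sigma (bb X1 Y1 Z1) = cst zeta ^ 2 * bb X1 Y1 Z1"
  "sigma (cc X1 Y1 Z1) = cst zeta * cc X1 Y1 Z1"
  "sigma (bb X2 Y2 Z2) = cst zeta ^ 2 * bb X2 Y2 Z2"
  "sigma (cc X2 Y2 Z2) = cst zeta * cc X2 Y2 Z2"
  "sigma (aa X1 Y1 Z1) = aa X1 Y1 Z1" "sigma (aa X2 Y2 Z2) = aa X2 Y2 Z2"
proof -
  note r = rhomD(3,4)[OF rhom_sigma] sigma_vars w2 rhom_pow[OF rhom_sigma] sigma_cst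
  show "sigma (bb X1 Y1 Z1) = cst zeta ^ 2 * bb X1 Y1 Z1"
    using w3 unfolding bb_def r by algebra
  show "sigma (cc X1 Y1 Z1) = cst zeta * cc X1 Y1 Z1"
    using w3 unfolding cc_def r by algebra
  show "sigma (bb X2 Y2 Z2) = cst zeta ^ 2 * bb X2 Y2 Z2"
    using w3 unfolding bb_def r by algebra
  show "sigma (cc X2 Y2 Z2) = cst zeta * cc X2 Y2 Z2"
    using w3 unfolding cc_def r by algebra
  show "sigma (aa X1 Y1 Z1) = aa X1 Y1 Z1" by (simp add: aa_def r ac_simps)
  show "sigma (aa X2 Y2 Z2) = aa X2 Y2 Z2" by (simp add: aa_def r ac_simps)
qed


lemma fs1: assumes "(b::'a::field) \<noteq> 0" "c \<noteq> 0"
  shows "b^2/c = b^3/(b*c)" "c^2/b = (b*c)^3/(b^3*(b*c))" "b*c = (b^2/c)*(c^2/b)"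
    "b^3 = (b^2/c)*(b^2/c)*(c^2/b)"
  using assms by (simp_all add: field_simps power2_eq_square power3_eq_cube)

lemma lin1: "(u::'a::comm_ring_1) + v + (u - v) = 2*u" "u + v - (u - v) = 2*v"
  "(h::'a)*(x+y) + h*(x-y) = h*(2*x)" "h*(x+y) - h*(x-y) = h*(2*y)"
  by (simp_all add: algebra_simps mult_2)

lemma part1:
  shows "gen_subfield {F1 X1 Y1 Z1, F2 X1 Y1 Z1, F3 X1 Y1 Z1, F1 X2 Y2 Z2,
                       G1 X1 Y1 Z1 X2 Y2 Z2, G2 X1 Y1 Z1 X2 Y2 Z2}
       = gen_subfield {aa X1 Y1 Z1, aa X2 Y2 Z2, (bb X1 Y1 Z1)^3,
                       bb X1 Y1 Z1 * cc X1 Y1 Z1, bb X1 Y1 Z1 * cc X2 Y2 Z2,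
                       cc X1 Y1 Z1 * bb X2 Y2 Z2}" (is "gen_subfield ?S1 = gen_subfield ?S2")
proof -
  define b where "b = bb X1 Y1 Z1"
  define c where "c = cc X1 Y1 Z1"
  define B2 where "B2 = bb X2 Y2 Z2"
  define C2 where "C2 = cc X2 Y2 Z2"
  have bnz: "b \<noteq> 0" and cnz: "c \<noteq> 0" using bc_nz by (auto simp: b_def c_def)
  let ?K = "gen_subfield ?S2"
  let ?K1 = "gen_subfield ?S1"
  have b3: "b^3 \<in> ?K" unfolding b_def by (rule gen_base) simp
  have bc: "b*c \<in> ?K" unfolding b_def c_def by (rule gen_base) simp
  have bC: "b*C2 \<in> ?K" unfolding b_def C2_def by (rule gen_base) simp
  have cB: "c*B2 \<in> ?K" unfolding c_def B2_def by (rule gen_base) simp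
  have e1: "b^2/c = b^3/(b*c)" by (rule fs1(1)[OF bnz cnz])
  have e2: "c^2/b = (b*c)^3/(b^3*(b*c))" by (rule fs1(2)[OF bnz cnz])
  have P: "b^2/c \<in> ?K" unfolding e1 using b3 bc by (rule gen_div)
  have Q: "c^2/b \<in> ?K" unfolding e2 by (rule gen_div[OF gen_pow[OF bc] gen_mult[OF b3 bc]])
  have eF2: "F2 X1 Y1 Z1 = b^2/c + c^2/b" by (simp add: F2_def b_def c_def)
  have eF3: "F3 X1 Y1 Z1 = cst (1/\<i>) * (b^2/c - c^2/b)" by (simp add: F3_def b_def c_def)
  have eG1: "G1 X1 Y1 Z1 X2 Y2 Z2 = cst (1/2) * (b*C2 + c*B2)" by (simp add: G1_def b_def c_def B2_def C2_def)
  have eG2: "G2 X1 Y1 Z1 X2 Y2 Z2 = cst (1/(2*\<i>)) * (b*C2 - c*B2)" by (simp add: G2_def b_def c_def B2_def C2_def)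
  have "?S1 \<subseteq> ?K"
  proof -
    have "F1 X1 Y1 Z1 \<in> ?K" "F1 X2 Y2 Z2 \<in> ?K" unfolding F1_def by (auto intro: gen_base)
    moreover have "F2 X1 Y1 Z1 \<in> ?K" unfolding eF2 using P Q by (rule gen_add)
    moreover have "F3 X1 Y1 Z1 \<in> ?K" unfolding eF3 by (rule gen_mult[OF gen_const gen_diff[OF P Q]])
    moreover have "G1 X1 Y1 Z1 X2 Y2 Z2 \<in> ?K" unfolding eG1 by (rule gen_mult[OF gen_const gen_add[OF bC cB]])
    moreover have "G2 X1 Y1 Z1 X2 Y2 Z2 \<in> ?K" unfolding eG2 by (rule gen_mult[OF gen_const gen_diff[OF bC cB]])
    ultimately show ?thesis by auto
  qed
  hence sub1: "?K1 \<subseteq> ?K" by (rule gen_mono)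
  have ii: "cst \<i> * (cst (1/\<i>) * z) = z" for z
    by (simp add: mult.assoc[symmetric] cst_mult cst_1)
  have ii2: "cst \<i> * (cst (1/(2*\<i>)) * z) = cst (1/2) * z" for z
    by (simp add: mult.assoc[symmetric] cst_mult)
  have hf: "cst (1/2) * (2 * z) = z" for z using half by (simp add: mult.assoc[symmetric])
  have F2in: "F2 X1 Y1 Z1 \<in> ?K1" and F3in: "F3 X1 Y1 Z1 \<in> ?K1" and G1in: "G1 X1 Y1 Z1 X2 Y2 Z2 \<in> ?K1"
    and G2in: "G2 X1 Y1 Z1 X2 Y2 Z2 \<in> ?K1" by (auto intro: gen_base)
  have Pe: "b^2/c = cst (1/2) * (F2 X1 Y1 Z1 + cst \<i> * F3 X1 Y1 Z1)"
    unfolding eF2 eF3 ii lin1 hf ..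
  have Qe: "c^2/b = cst (1/2) * (F2 X1 Y1 Z1 - cst \<i> * F3 X1 Y1 Z1)"
    unfolding eF2 eF3 ii lin1 hf ..
  have P1: "b^2/c \<in> ?K1" unfolding Pe by (rule gen_mult[OF gen_const gen_add[OF F2in gen_mult[OF gen_const F3in]]])
  have Q1: "c^2/b \<in> ?K1" unfolding Qe by (rule gen_mult[OF gen_const gen_diff[OF F2in gen_mult[OF gen_const F3in]]])
  have "b*c = (b^2/c) * (c^2/b)" by (rule fs1(3)[OF bnz cnz])
  hence bc1: "b*c \<in> ?K1" using gen_mult[OF P1 Q1] by simp
  have "b^3 = (b^2/c) * (b^2/c) * (c^2/b)" by (rule fs1(4)[OF bnz cnz])
  hence b31: "b^3 \<in> ?K1" using gen_mult[OF gen_mult[OF P1 P1] Q1] by simp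
  have "b*C2 = G1 X1 Y1 Z1 X2 Y2 Z2 + cst \<i> * G2 X1 Y1 Z1 X2 Y2 Z2"
    unfolding eG1 eG2 ii2 lin1 hf ..
  hence bC1: "b*C2 \<in> ?K1" using gen_add[OF G1in gen_mult[OF gen_const G2in]] by simp
  have "c*B2 = G1 X1 Y1 Z1 X2 Y2 Z2 - cst \<i> * G2 X1 Y1 Z1 X2 Y2 Z2"
    unfolding eG1 eG2 ii2 lin1 hf ..
  hence cB1: "c*B2 \<in> ?K1" using gen_diff[OF G1in gen_mult[OF gen_const G2in]] by simp
  have "?S2 \<subseteq> ?K1"
  proof -
    have "aa X1 Y1 Z1 \<in> ?K1" "aa X2 Y2 Z2 \<in> ?K1" using gen_base[of "F1 X1 Y1 Z1"] gen_base[of "F1 X2 Y2 Z2"]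
      by (auto simp: F1_def)
    thus ?thesis using bc1 b31 bC1 cB1 by (auto simp: b_def c_def B2_def C2_def)
  qed
  hence "?K \<subseteq> ?K1" by (rule gen_mono)
  thus ?thesis using sub1 by blast
qed


definition KK :: "L6 set" where
  "KK = gen_subfield {aa X1 Y1 Z1, aa X2 Y2 Z2, (bb X1 Y1 Z1)^3,
                       bb X1 Y1 Z1 * cc X1 Y1 Z1, bb X1 Y1 Z1 * cc X2 Y2 Z2,
                       cc X1 Y1 Z1 * bb X2 Y2 Z2}"

lemma KK_fix: "KK \<subseteq> {f. sigma f = f}"
  unfolding KK_def
proof (rule gen_sub)
  define w where "w = cst zeta"
  have w3': "w^3 = 1" using w3 by (simp add: w_def)
  note sb = sig_b[folded w_def]
  have "sigma (bb X1 Y1 Z1 ^ 3) = bb X1 Y1 Z1 ^ 3"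
    unfolding rhom_pow[OF rhom_sigma] sb using w3' by algebra
  moreover have "sigma (bb X1 Y1 Z1 * cc X1 Y1 Z1) = bb X1 Y1 Z1 * cc X1 Y1 Z1"
    unfolding rhomD(4)[OF rhom_sigma] sb using w3' by algebra
  moreover have "sigma (bb X1 Y1 Z1 * cc X2 Y2 Z2) = bb X1 Y1 Z1 * cc X2 Y2 Z2"
    unfolding rhomD(4)[OF rhom_sigma] sb using w3' by algebra
  moreover have "sigma (cc X1 Y1 Z1 * bb X2 Y2 Z2) = cc X1 Y1 Z1 * bb X2 Y2 Z2"
    unfolding rhomD(4)[OF rhom_sigma] sb using w3' by algebra
  ultimately show "{aa X1 Y1 Z1, aa X2 Y2 Z2, (bb X1 Y1 Z1)^3,
                       bb X1 Y1 Z1 * cc X1 Y1 Z1, bb X1 Y1 Z1 * cc X2 Y2 Z2,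
                       cc X1 Y1 Z1 * bb X2 Y2 Z2} \<subseteq> {f. sigma f = f}"
    using sb by auto
qed (auto simp: sigma_cst rhomD(3,4)[OF rhom_sigma] rhom_minus[OF rhom_sigma] sigma_inverse)


lemma regroup: "(B::'a::comm_ring_1) = X*b \<Longrightarrow> C = Y*b2 \<Longrightarrow> q0 + q1*B + q2*C = q0 + (q1*X)*b + (q2*Y)*b2"
  by (simp add: mult.assoc)

lemma fix_KK: assumes fx: "sigma f = f" shows "f \<in> KK"
proof -
  define b where "b = bb X1 Y1 Z1"
  define c where "c = cc X1 Y1 Z1"
  define B2 where "B2 = bb X2 Y2 Z2"
  define C2 where "C2 = cc X2 Y2 Z2"
  define w where "w = cst zeta"
  have bnz: "b \<noteq> 0" and cnz: "c \<noteq> 0" using bc_nz by (auto simp: b_def c_def)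
  have w3': "w^3 = 1" using w3 by (simp add: w_def)
  have ws: "1 + w + w^2 = 0" using wsum by (simp add: w_def)
  have kb3: "b^3 \<in> KK" unfolding KK_def b_def by (rule gen_base) simp
  have kbc: "b*c \<in> KK" unfolding KK_def b_def c_def by (rule gen_base) simp
  have kbC: "b*C2 \<in> KK" unfolding KK_def b_def C2_def by (rule gen_base) simp
  have kcB: "c*B2 \<in> KK" unfolding KK_def c_def B2_def by (rule gen_base) simp
  have ka1: "aa X1 Y1 Z1 \<in> KK" unfolding KK_def by (rule gen_base) simp
  have ka2: "aa X2 Y2 Z2 \<in> KK" unfolding KK_def by (rule gen_base) simp
  have kc: "cst z \<in> KK" for z unfolding KK_def by (rule gen_const)
  have kw: "w \<in> KK" unfolding w_def by (rule kc)
  have kadd: "x + y \<in> KK" if "x \<in> KK" "y \<in> KK" for x y using that unfolding KK_def by (rule gen_add)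
  have kmult: "x * y \<in> KK" if "x \<in> KK" "y \<in> KK" for x y using that unfolding KK_def by (rule gen_mult)
  have kdiv: "x / y \<in> KK" if "x \<in> KK" "y \<in> KK" for x y using that unfolding KK_def by (rule gen_div)
  have kpow: "x ^ n \<in> KK" if "x \<in> KK" for x n using that unfolding KK_def by (rule gen_pow)
  have kfix: "sigma u = u" if "u \<in> KK" for u using KK_fix that by blast
  have sb: "sigma b = w^2 * b" using sig_b by (simp add: b_def w_def)
  define V where "V = {x. \<exists>u0 u1 u2. u0 \<in> KK \<and> u1 \<in> KK \<and> u2 \<in> KK \<and> x = u0 + u1*b + u2*b^2}"
  have VI: "u0 + u1*b + u2*b^2 \<in> V" if "u0 \<in> KK" "u1 \<in> KK" "u2 \<in> KK" for u0 u1 u2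
    using that unfolding V_def by blast
  have Vc: "q0 + q1*b + q2*c \<in> V" if "q0 \<in> KK" "q1 \<in> KK" "q2 \<in> KK" for q0 q1 q2
  proof -
    have "c = (b*c/b^3) * b^2" using bnz by (simp add: field_simps power2_eq_square power3_eq_cube)
    hence e: "q0 + q1*b + q2*c = q0 + (q1*1)*b + (q2*(b*c/b^3))*b^2" by (rule regroup[rotated]) simp
    show ?thesis unfolding e by (rule VI[OF that(1) kmult[OF that(2) kc[of 1, unfolded cst_1]] kmult[OF that(3) kdiv[OF kbc kb3]]])
  qed
  have Vd: "q0 + q1*B2 + q2*C2 \<in> V" if "q0 \<in> KK" "q1 \<in> KK" "q2 \<in> KK" for q0 q1 q2
  proof -
    have "B2 = (c*B2/(b*c)) * b" using bnz cnz by (simp add: field_simps)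
    moreover have "C2 = (b*C2/b^3) * b^2" using bnz by (simp add: field_simps power2_eq_square power3_eq_cube)
    ultimately have "q0 + q1*B2 + q2*C2 = q0 + (q1*(c*B2/(b*c)))*b + (q2*(b*C2/b^3))*b^2"
      by (rule regroup)
    note e = this
    show ?thesis unfolding e
      by (rule VI[OF that(1) kmult[OF that(2) kdiv[OF kcB kbc]] kmult[OF that(3) kdiv[OF kbC kb3]]])
  qed
  have Vadd: "x + y \<in> V" if xv: "x \<in> V" and yv: "y \<in> V" for x y
  proof -
    obtain u0 u1 u2 where u: "u0 \<in> KK" "u1 \<in> KK" "u2 \<in> KK" "x = u0 + u1*b + u2*b^2"
      using xv unfolding V_def by blast
    obtain v0 v1 v2 where v: "v0 \<in> KK" "v1 \<in> KK" "v2 \<in> KK" "y = v0 + v1*b + v2*b^2"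
      using yv unfolding V_def by blast
    have e: "x + y = (u0+v0) + (u1+v1)*b + (u2+v2)*b^2" using u(4) v(4) by (simp add: algebra_simps)
    show ?thesis unfolding e by (rule VI[OF kadd[OF u(1) v(1)] kadd[OF u(2) v(2)] kadd[OF u(3) v(3)]])
  qed
  have Vmult: "x * y \<in> V" if xv: "x \<in> V" and yv: "y \<in> V" for x y
  proof -
    obtain u0 u1 u2 where u: "u0 \<in> KK" "u1 \<in> KK" "u2 \<in> KK" "x = u0 + u1*b + u2*b^2"
      using xv unfolding V_def by blast
    obtain v0 v1 v2 where v: "v0 \<in> KK" "v1 \<in> KK" "v2 \<in> KK" "y = v0 + v1*b + v2*b^2"
      using yv unfolding V_def by blast
    have "x * y = (u0*v0 + b^3*(u1*v2+u2*v1)) + (u0*v1+u1*v0+b^3*(u2*v2))*b + (u0*v2+u1*v1+u2*v0)*b^2"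
      unfolding u(4) v(4) by algebra
    note e = this
    show ?thesis unfolding e
      by (rule VI[OF kadd[OF kmult[OF u(1) v(1)] kmult[OF kb3 kadd[OF kmult[OF u(2) v(3)] kmult[OF u(3) v(2)]]]]
          kadd[OF kadd[OF kmult[OF u(1) v(2)] kmult[OF u(2) v(1)]] kmult[OF kb3 kmult[OF u(3) v(3)]]]
          kadd[OF kadd[OF kmult[OF u(1) v(3)] kmult[OF u(2) v(2)]] kmult[OF u(3) v(1)]]])
  qed
  have w2': "cst (zeta^2) = w^2" by (simp add: w_def w2)
  have bbe: "bb x y z = x + w*y + w^2*z" for x y z by (simp add: bb_def w2' w_def)
  have cce: "cc x y z = x + w^2*y + w*z" for x y z by (simp add: cc_def w2' w_def)
  note tr = triple[OF w3' ws]
  have "X1 = cst (1/3) * (aa X1 Y1 Z1 + (1)*b + (1)*c)"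
    by (rule third_eq) (use tr(1)[where x=X1 and y=Y1 and z=Z1] in \<open>simp add: aa_def b_def c_def bbe cce\<close>)
  also have "\<dots> = cst (1/3) * aa X1 Y1 Z1 + (cst (1/3) * (1))*b + (cst (1/3) * (1))*c" by (simp add: algebra_simps)
  finally have eX1: "X1 = cst (1/3) * aa X1 Y1 Z1 + (cst (1/3) * (1))*b + (cst (1/3) * (1))*c" .
  have vX1: "X1 \<in> V" by (subst eX1) (rule Vc[OF kmult[OF kc ka1] kmult[OF kc kc[of 1, unfolded cst_1]] kmult[OF kc kc[of 1, unfolded cst_1]]])
  have "Y1 = cst (1/3) * (aa X1 Y1 Z1 + (w^2)*b + (w)*c)"
    by (rule third_eq) (use tr(2)[where x=X1 and y=Y1 and z=Z1] in \<open>simp add: aa_def b_def c_def bbe cce\<close>)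
  also have "\<dots> = cst (1/3) * aa X1 Y1 Z1 + (cst (1/3) * (w^2))*b + (cst (1/3) * (w))*c" by (simp add: algebra_simps)
  finally have eY1: "Y1 = cst (1/3) * aa X1 Y1 Z1 + (cst (1/3) * (w^2))*b + (cst (1/3) * (w))*c" .
  have vY1: "Y1 \<in> V" by (subst eY1) (rule Vc[OF kmult[OF kc ka1] kmult[OF kc kpow[OF kw]] kmult[OF kc kw]])
  have "Z1 = cst (1/3) * (aa X1 Y1 Z1 + (w)*b + (w^2)*c)"
    by (rule third_eq) (use tr(3)[where x=X1 and y=Y1 and z=Z1] in \<open>simp add: aa_def b_def c_def bbe cce\<close>)
  also have "\<dots> = cst (1/3) * aa X1 Y1 Z1 + (cst (1/3) * (w))*b + (cst (1/3) * (w^2))*c" by (simp add: algebra_simps)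
  finally have eZ1: "Z1 = cst (1/3) * aa X1 Y1 Z1 + (cst (1/3) * (w))*b + (cst (1/3) * (w^2))*c" .
  have vZ1: "Z1 \<in> V" by (subst eZ1) (rule Vc[OF kmult[OF kc ka1] kmult[OF kc kw] kmult[OF kc kpow[OF kw]]])
  have "X2 = cst (1/3) * (aa X2 Y2 Z2 + (1)*B2 + (1)*C2)"
    by (rule third_eq) (use tr(1)[where x=X2 and y=Y2 and z=Z2] in \<open>simp add: aa_def B2_def C2_def bbe cce\<close>)
  also have "\<dots> = cst (1/3) * aa X2 Y2 Z2 + (cst (1/3) * (1))*B2 + (cst (1/3) * (1))*C2" by (simp add: algebra_simps)
  finally have eX2: "X2 = cst (1/3) * aa X2 Y2 Z2 + (cst (1/3) * (1))*B2 + (cst (1/3) * (1))*C2" .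
  have vX2: "X2 \<in> V" by (subst eX2) (rule Vd[OF kmult[OF kc ka2] kmult[OF kc kc[of 1, unfolded cst_1]] kmult[OF kc kc[of 1, unfolded cst_1]]])
  have "Y2 = cst (1/3) * (aa X2 Y2 Z2 + (w^2)*B2 + (w)*C2)"
    by (rule third_eq) (use tr(2)[where x=X2 and y=Y2 and z=Z2] in \<open>simp add: aa_def B2_def C2_def bbe cce\<close>)
  also have "\<dots> = cst (1/3) * aa X2 Y2 Z2 + (cst (1/3) * (w^2))*B2 + (cst (1/3) * (w))*C2" by (simp add: algebra_simps)
  finally have eY2: "Y2 = cst (1/3) * aa X2 Y2 Z2 + (cst (1/3) * (w^2))*B2 + (cst (1/3) * (w))*C2" .
  have vY2: "Y2 \<in> V" by (subst eY2) (rule Vd[OF kmult[OF kc ka2] kmult[OF kc kpow[OF kw]] kmult[OF kc kw]])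
  have "Z2 = cst (1/3) * (aa X2 Y2 Z2 + (w)*B2 + (w^2)*C2)"
    by (rule third_eq) (use tr(3)[where x=X2 and y=Y2 and z=Z2] in \<open>simp add: aa_def B2_def C2_def bbe cce\<close>)
  also have "\<dots> = cst (1/3) * aa X2 Y2 Z2 + (cst (1/3) * (w))*B2 + (cst (1/3) * (w^2))*C2" by (simp add: algebra_simps)
  finally have eZ2: "Z2 = cst (1/3) * aa X2 Y2 Z2 + (cst (1/3) * (w))*B2 + (cst (1/3) * (w^2))*C2" .
  have vZ2: "Z2 \<in> V" by (subst eZ2) (rule Vd[OF kmult[OF kc ka2] kmult[OF kc kw] kmult[OF kc kpow[OF kw]]])
  have vc: "cst z \<in> V" for z
  proof -
    have "cst z = cst z + cst 0 * b + cst 0 * b^2" by (simp add: cst_0)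
    thus ?thesis by (metis VI kc)
  qed
  have vfr: "fr p \<in> V" for p
    by (rule all_in[OF vc vX1 vY1 vZ1 vX2 vY2 vZ2 Vadd Vmult])
  have sigV: "sigma (u0 + u1*b + u2*b^2) = u0 + (w^2*u1)*b + (w*u2)*b^2"
    if "u0 \<in> KK" "u1 \<in> KK" "u2 \<in> KK" for u0 u1 u2
  proof -
    have "sigma (u0 + u1*b + u2*b^2) = u0 + u1*(w^2*b) + u2*(w^2*b)^2"
      by (simp add: rhomD(3,4)[OF rhom_sigma] rhom_pow[OF rhom_sigma] kfix that sb)
    also have "\<dots> = u0 + (w^2*u1)*b + (w*u2)*b^2" using w3' by algebra
    finally show ?thesis .
  qed
  have Vsig: "sigma x \<in> V" if xv: "x \<in> V" for x
  proof -
    obtain u0 u1 u2 where u: "u0 \<in> KK" "u1 \<in> KK" "u2 \<in> KK" "x = u0 + u1*b + u2*b^2"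
      using xv unfolding V_def by blast
    show ?thesis unfolding u(4) sigV[OF u(1-3)] by (rule VI[OF u(1) kmult[OF kpow[OF kw] u(2)] kmult[OF kw u(3)]])
  qed
  have Vfix: "x \<in> KK" if xv: "x \<in> V" and xs: "sigma x = x" for x
  proof -
    obtain u0 u1 u2 where u: "u0 \<in> KK" "u1 \<in> KK" "u2 \<in> KK" "x = u0 + u1*b + u2*b^2"
      using xv unfolding V_def by blast
    have s1: "sigma x = u0 + (w^2*u1)*b + (w*u2)*b^2" using u sigV by simp
    have s2: "sigma (sigma x) = u0 + (w^2*(w^2*u1))*b + (w*(w*u2))*b^2"
      unfolding s1 by (rule sigV) (simp_all add: u kmult kw kpow)
    have "3 * x = x + sigma x + sigma (sigma x)" using xs by simp
    also have "\<dots> = 3 * u0" apply (subst s2) apply (subst s1) apply (subst u(4)) using w3' ws by algebra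
    finally have "x = cst (1/3) * (3 * u0)" by (rule third_eq)
    also have "3 * u0 = u0 + u0 + u0" by simp
    finally have e: "x = cst (1/3) * (u0 + u0 + u0)" .
    show ?thesis unfolding e by (rule kmult[OF kc kadd[OF kadd[OF u(1) u(1)] u(1)]])
  qed
  obtain a d where f: "f = Fract a d" "d \<noteq> 0" by (cases f)
  define B where "B = fr d"
  define N where "N = B * sigma B * sigma (sigma B)"
  define M where "M = fr a * sigma B * sigma (sigma B)"
  have Bnz: "B \<noteq> 0" using f(2) fr_nz B_def by simp
  have Nnz: "N \<noteq> 0" using Bnz sigma_nz N_def by simp
  have fe: "f = fr a / B" using f by (simp add: fr_def B_def)
  have MN: "M = f * N" unfolding M_def N_def fe using Bnz by simp
  have sN: "sigma N = N" unfolding N_def by (simp add: rhomD(4)[OF rhom_sigma] sigma3)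
  have sM: "sigma M = M" unfolding MN by (simp add: rhomD(4)[OF rhom_sigma] sN fx)
  have vB: "B \<in> V" unfolding B_def by (rule vfr)
  have vN: "N \<in> V" unfolding N_def by (intro Vmult Vsig vB)
  have vM: "M \<in> V" unfolding M_def by (intro Vmult Vsig vB vfr)
  have e: "f = M / N" using MN Nnz by simp
  show ?thesis unfolding e by (rule kdiv[OF Vfix[OF vM sM] Vfix[OF vN sN]])
qed


theorem mainTheorem7:
  shows "gen_subfield {F1 X1 Y1 Z1, F2 X1 Y1 Z1, F3 X1 Y1 Z1, F1 X2 Y2 Z2,
                       G1 X1 Y1 Z1 X2 Y2 Z2, G2 X1 Y1 Z1 X2 Y2 Z2}
       = gen_subfield {aa X1 Y1 Z1, aa X2 Y2 Z2, (bb X1 Y1 Z1)^3,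
                       bb X1 Y1 Z1 * cc X1 Y1 Z1, bb X1 Y1 Z1 * cc X2 Y2 Z2,
                       cc X1 Y1 Z1 * bb X2 Y2 Z2}
   \<and> gen_subfield {aa X1 Y1 Z1, aa X2 Y2 Z2, (bb X1 Y1 Z1)^3,
                       bb X1 Y1 Z1 * cc X1 Y1 Z1, bb X1 Y1 Z1 * cc X2 Y2 Z2,
                       cc X1 Y1 Z1 * bb X2 Y2 Z2}
       = {f. sigma f = f}"
proof
  show "gen_subfield {F1 X1 Y1 Z1, F2 X1 Y1 Z1, F3 X1 Y1 Z1, F1 X2 Y2 Z2,
                       G1 X1 Y1 Z1 X2 Y2 Z2, G2 X1 Y1 Z1 X2 Y2 Z2}
       = gen_subfield {aa X1 Y1 Z1, aa X2 Y2 Z2, (bb X1 Y1 Z1)^3,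
                       bb X1 Y1 Z1 * cc X1 Y1 Z1, bb X1 Y1 Z1 * cc X2 Y2 Z2,
                       cc X1 Y1 Z1 * bb X2 Y2 Z2}" by (rule part1)
  show "gen_subfield {aa X1 Y1 Z1, aa X2 Y2 Z2, (bb X1 Y1 Z1)^3,
                       bb X1 Y1 Z1 * cc X1 Y1 Z1, bb X1 Y1 Z1 * cc X2 Y2 Z2,
                       cc X1 Y1 Z1 * bb X2 Y2 Z2}
       = {f. sigma f = f}"
    using KK_fix fix_KK unfolding KK_def by blast
qed

end
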